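(* Let $\mu$ be a probability measure on $[0,\infty)$ with mean $1$ such that $\Lambda_\mu$ is finite on a neighborhood of $0$, and let $P$ be a probability measure on $(\Omega,\mathcal{M})$. (1) If $Q\ll P$ and there is $r_0>0$ such that $P(dQ/dP\ge r)\ge G_\mu(r)$ for all $r\in[0,r_0]$ and $P(dQ/dP\ge r)\le G_\mu(r)$ for all $r>r_0$, then $Q\in\mathcal{U}^\mu(P)$. (2) Suppose $Q_0\in\mathcal{U}^\mu(P)$ and $Q\ll P$ is a probability measure. If there is $r_0>0$ such that, $P$-a.s., $r_0 1_{dQ_0/dP\le r_0}\ge\frac{dQ}{dP}1_{dQ_0/dP\le r_0}\ge\frac{dQ_0}{dP}1_{dQ_0/dP\le r_0}$ and $r_01_{dQ_0/dP\ge r_0}\le\frac{dQ}{dP}1_{dQ_0/dP\ge r_0}\le\frac{dQ_0}{dP}1_{dQ_0/dP\ge r_0}$, then $Q\in\mathcal{U}^\mu(P)$. (3) Suppose $Q_0\in\mathcal{U}^\mu(P)$, $Q$ is a probability measure, and $\nu$ is a $\sigma$-finite positive measure with $dQ_0=q_0\,d\nu$, $dP=p\,d\nu$, $dQ=q\,d\nu$. If there is $r_0>0$ such that $q(x)$ lies between $q_0(x)$ and $r_0p(x)$ for $\nu$-a.e. $x$, then $Q\in\mathcal{U}^\mu(P)$.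
   Context: For a probability measure $\mu$ on $[0,\infty)$ with mean $1$, $G_\mu(r)=\mu([r,\infty))$ for $r\ge0$ and $\Lambda_\mu(\lambda)=\log\big((\lambda+1)\int_0^\infty G_\mu(z)z^\lambda\,dz\big)$ for $\lambda\ge0$. With $\Lambda_Q^f(\lambda)=\log E_Q[e^{\lambda f}]$, and $\Lambda_\mu$ finite near $0$, $\mathcal{U}^\mu(P)=\{Q \text{ probability measure}: Q\ll P,\ \Lambda_Q^{\log(dQ/dP)}(\lambda)\le\Lambda_\mu(\lambda)\ \text{for all }\lambda>0\}$. *)

theory Defs
  imports "HOL-Probability.Probability"
begin

definition ln_ennreal :: "ennreal \<Rightarrow> ereal" where
  "ln_ennreal x = (if x = \<infinity> then \<infinity> else if x = 0 then - \<infinity>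
                   else ereal (ln (enn2real x)))"

definition G_mu :: "real measure \<Rightarrow> real \<Rightarrow> real" where
  "G_mu mu r = measure mu {r..}"

definition Lambda_mu :: "real measure \<Rightarrow> real \<Rightarrow> ereal" where
  "Lambda_mu mu l = ln_ennreal (ennreal (l + 1) *
      (\<integral>\<^sup>+ z \<in> {0<..}. ennreal (G_mu mu z * z powr l) \<partial>lborel))"

definition Lambda_Q :: "'a measure \<Rightarrow> ('a \<Rightarrow> real) \<Rightarrow> real \<Rightarrow> ereal" where
  "Lambda_Q Q f l = ln_ennreal (\<integral>\<^sup>+ x. ennreal (exp (l * f x)) \<partial>Q)"

definition log_dens :: "'a measure \<Rightarrow> 'a measure \<Rightarrow> 'a \<Rightarrow> real" where
  "log_dens P Q x = ln (enn2real (RN_deriv P Q x))"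

definition U_mu :: "real measure \<Rightarrow> 'a measure \<Rightarrow> 'a measure set" where
  "U_mu mu P = {Q. prob_space Q \<and> sets Q = sets P \<and> absolutely_continuous P Q \<and>
      (\<forall>l>0. Lambda_Q Q (log_dens P Q) l \<le> Lambda_mu mu l)}"

end

theory Submission
  imports Defs
begin


lemma tangent_powr:
  fixes y z l :: real
  assumes "y \<ge> 0" "z > 0" "l \<ge> 0"
  shows "y powr (1+l) \<ge> z powr (1+l) + (1+l) * z powr l * (y - z)"
proof (cases "y = 0")
  case True
  have "z powr (1+l) = z * z powr l" using assms by (simp add: powr_add)
  then show ?thesis using True assms by (simp add: algebra_simps)
next
  case False
  hence y: "y > 0" using assms by simp
  have "convex_on {0<..} (\<lambda>x. x powr (1+l))" using powr_convex[of "1+l"] assms by simp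
  from convex_on_imp_above_tangent[OF this, of z y "(1+l) * z powr (1 + l - 1)"]
  have "y powr (1+l) - z powr (1+l) \<ge> (1+l) * z powr (1 + l - 1) * (y - z)"
    using assms y has_real_derivative_powr[of z "1+l"]
    by (auto simp: interior_open has_field_derivative_at_within)
  then show ?thesis by simp
qed

lemma pointwise2:
  fixes z0 z r0 l :: real
  assumes "z0 \<ge> 0" "z \<ge> 0" "r0 > 0" "l \<ge> 0"
    and h1: "z0 \<le> r0 \<longrightarrow> z0 \<le> z \<and> z \<le> r0"
    and h2: "z0 \<ge> r0 \<longrightarrow> r0 \<le> z \<and> z \<le> z0"
  shows "z powr (1+l) + (1+l) * r0 powr l * z0 \<le> z0 powr (1+l) + (1+l) * r0 powr l * z"
proof -
  show ?thesis
  proof (cases "z = 0")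
    case True
    hence "z0 = 0" using h1 h2 assms by (cases "z0 \<le> r0") auto
    thus ?thesis using True by simp
  next
  case False
  hence zpos: "z > 0" using assms by simp
  have t: "z0 powr (1+l) \<ge> z powr (1+l) + (1+l) * z powr l * (z0 - z)"
    using tangent_powr[OF assms(1) zpos assms(4)] .
  have "(1+l) * z powr l * (z0 - z) \<ge> (1+l) * r0 powr l * (z0 - z)"
  proof (cases "z0 \<le> r0")
    case True
    hence "z0 \<le> z" "z \<le> r0" using h1 by auto
    hence "z powr l \<le> r0 powr l" using zpos assms by (intro powr_mono2) auto
    hence "z powr l * (z0 - z) \<ge> r0 powr l * (z0 - z)" using \<open>z0 \<le> z\<close>
      by (intro mult_right_mono_neg) auto
    thus ?thesis using assms by (simp add: mult.assoc)
  next
    case False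
    hence "z \<le> z0" "r0 \<le> z" using h2 by auto
    hence "z powr l \<ge> r0 powr l" using zpos assms by (intro powr_mono2) auto
    hence "z powr l * (z0 - z) \<ge> r0 powr l * (z0 - z)" using \<open>z \<le> z0\<close>
      by (intro mult_right_mono) auto
    thus ?thesis using assms by (simp add: mult.assoc)
  qed
  with t show ?thesis by (simp add: algebra_simps)
qed
qed

lemma ln_ennreal_mono:
  assumes "x \<le> y" shows "ln_ennreal x \<le> ln_ennreal y"
proof -
  consider "y = \<infinity>" | "x = 0" | "y \<noteq> \<infinity>" "x \<noteq> 0" by blast
  then show ?thesis
  proof cases
    case 3
    hence yf: "y < \<infinity>" by (simp add: less_top)
    hence xf: "x < \<infinity>" using assms by (meson le_less_trans)
    have x0: "x > 0" using 3 by (simp add: zero_less_iff_neq_zero)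
    hence y0: "y \<noteq> 0" using assms by auto
    have "enn2real x > 0" using x0 xf by (simp add: enn2real_positive_iff)
    moreover have "enn2real x \<le> enn2real y" using assms yf by (simp add: enn2real_mono)
    ultimately have "ln (enn2real x) \<le> ln (enn2real y)" by simp
    thus ?thesis using 3 xf y0 unfolding ln_ennreal_def by simp
  qed (auto simp: ln_ennreal_def)
qed



lemma powr_nn_integral:
  fixes z b :: real
  assumes "z \<ge> 0" "b \<ge> 0"
  shows "ennreal (z powr (b+1)) = ennreal (b+1) * (\<integral>\<^sup>+s. ennreal (s powr b) * indicator {0..z} s \<partial>lborel)"
proof -
  have "(\<integral>\<^sup>+s. ennreal (s powr b) * indicator {0..z} s \<partial>lborel) = ennreal (z powr (b+1) / (b+1))"
    using assms by (intro nn_integral_has_integral_lebesgue' has_integral_powr_from_0) auto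
  moreover have "ennreal (b+1) * ennreal (z powr (b+1) / (b+1)) = ennreal ((b+1) * (z powr (b+1) / (b+1)))"
    using assms by (intro ennreal_mult[symmetric]) auto
  ultimately show ?thesis using assms by simp
qed

lemma layer_cake:
  fixes M :: "'a measure" and Z :: "'a \<Rightarrow> real" and b :: real
  assumes fin: "finite_measure M" and Zm: "Z \<in> borel_measurable M"
    and Zn: "\<And>x. x \<in> space M \<Longrightarrow> 0 \<le> Z x" and b: "b \<ge> 0"
  shows "(\<integral>\<^sup>+x. ennreal (Z x powr (b+1)) \<partial>M) =
    ennreal (b+1) * (\<integral>\<^sup>+s\<in>{0<..}. ennreal (measure M {x\<in>space M. s \<le> Z x} * s powr b) \<partial>lborel)"
proof -
  interpret finite_measure M by fact
  interpret P: pair_sigma_finite M lborel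
    by (simp add: pair_sigma_finite_def sigma_finite_measure_axioms lborel.sigma_finite_measure_axioms)
  define F where "F = (\<lambda>p. if 0 < snd p \<and> snd p \<le> Z (fst p) then ennreal (snd p powr b) else 0)"
  have Fm: "F \<in> borel_measurable (M \<Otimes>\<^sub>M lborel)"
  proof -
    have "Measurable.pred (M \<Otimes>\<^sub>M lborel) (\<lambda>p. 0 < snd p \<and> snd p \<le> Z (fst p))"
      using Zm by measurable
    then have S: "{p \<in> space (M \<Otimes>\<^sub>M lborel). 0 < snd p \<and> snd p \<le> Z (fst p)} \<in> sets (M \<Otimes>\<^sub>M lborel)"
      by (simp add: pred_def)
    have f: "(\<lambda>p. ennreal (snd p powr b)) \<in> borel_measurable (M \<Otimes>\<^sub>M lborel)"
      by measurable
    show ?thesis unfolding F_def by (rule measurable_If[OF f _ S]) simp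
  qed
  have 1: "(\<integral>\<^sup>+x. ennreal (Z x powr (b+1)) \<partial>M) = (\<integral>\<^sup>+x. ennreal (b+1) * (\<integral>\<^sup>+s. F (x,s) \<partial>lborel) \<partial>M)"
  proof (rule nn_integral_cong)
    fix x assume x: "x \<in> space M"
    have "(\<integral>\<^sup>+s. F (x,s) \<partial>lborel) = (\<integral>\<^sup>+s. ennreal (s powr b) * indicator {0..Z x} s \<partial>lborel)"
      by (rule nn_integral_cong) (auto simp: F_def indicator_def)
    then show "ennreal (Z x powr (b+1)) = ennreal (b+1) * (\<integral>\<^sup>+s. F (x,s) \<partial>lborel)"
      using powr_nn_integral[OF Zn[OF x] b] by simp
  qed
  also have "\<dots> = ennreal (b+1) * (\<integral>\<^sup>+x. (\<integral>\<^sup>+s. F (x,s) \<partial>lborel) \<partial>M)"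
    using lborel.borel_measurable_nn_integral_fst[OF Fm] by (subst nn_integral_cmult) auto
  also have "(\<integral>\<^sup>+x. (\<integral>\<^sup>+s. F (x,s) \<partial>lborel) \<partial>M) = (\<integral>\<^sup>+s. (\<integral>\<^sup>+x. F (x,s) \<partial>M) \<partial>lborel)"
    using P.Fubini[OF Fm] by simp
  also have "\<dots> = (\<integral>\<^sup>+s\<in>{0<..}. ennreal (measure M {x\<in>space M. s \<le> Z x} * s powr b) \<partial>lborel)"
  proof (rule nn_integral_cong)
    fix s :: real
    have A: "{x\<in>space M. s \<le> Z x} \<in> sets M" using Zm by measurable
    have "(\<integral>\<^sup>+x. F (x,s) \<partial>M) = (\<integral>\<^sup>+x. (ennreal (s powr b) * indicator {0<..} s) * indicator {x\<in>space M. s \<le> Z x} x \<partial>M)"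
      by (rule nn_integral_cong) (auto simp: F_def indicator_def)
    also have "\<dots> = ennreal (s powr b) * indicator {0<..} s * emeasure M {x\<in>space M. s \<le> Z x}"
      using A by (simp add: nn_integral_cmult_indicator)
    also have "\<dots> = ennreal (measure M {x\<in>space M. s \<le> Z x} * s powr b) * indicator {0<..} s"
      by (simp add: emeasure_eq_measure ennreal_mult mult_ac)
    finally show "(\<integral>\<^sup>+x. F (x,s) \<partial>M) = ennreal (measure M {x\<in>space M. s \<le> Z x} * s powr b) * indicator {0<..} s" .
  qed
  finally show ?thesis .
qed



lemma antimono_measurable:
  fixes f :: "real \<Rightarrow> real"
  assumes "\<And>x y. x \<le> y \<Longrightarrow> f y \<le> f x"
  shows "f \<in> borel_measurable borel"
proof -
  have "mono (\<lambda>x. - f x)" by (auto simp: mono_def assms)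
  then have "(\<lambda>x. - f x) \<in> borel_measurable borel" by (rule borel_measurable_mono)
  then have "(\<lambda>x. - (- f x)) \<in> borel_measurable borel" by measurable
  then show ?thesis by simp
qed

lemma tail_measurable:
  assumes "finite_measure M" "Z \<in> borel_measurable M"
  shows "(\<lambda>s::real. measure M {x\<in>space M. s \<le> Z x}) \<in> borel_measurable borel"
proof (rule antimono_measurable)
  fix s t :: real assume "s \<le> t"
  then show "measure M {x\<in>space M. t \<le> Z x} \<le> measure M {x\<in>space M. s \<le> Z x}"
    using assms by (intro finite_measure.finite_measure_mono) auto
qed

lemma RN_facts:
  assumes P: "prob_space P" and Q: "prob_space Q" and sQ: "sets Q = sets P"
    and ac: "absolutely_continuous P Q"
  shows "AE x in P. RN_deriv P Q x \<noteq> \<infinity>"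
    and "(\<integral>\<^sup>+x. ennreal (enn2real (RN_deriv P Q x)) \<partial>P) = 1"
proof -
  interpret P: prob_space P by fact
  interpret Q: prob_space Q by fact
  show fin: "AE x in P. RN_deriv P Q x \<noteq> \<infinity>"
    using P.RN_deriv_finite[OF Q.sigma_finite_measure_axioms ac sQ] .
  have "(\<integral>\<^sup>+x. ennreal (enn2real (RN_deriv P Q x)) \<partial>P) = (\<integral>\<^sup>+x. RN_deriv P Q x * 1 \<partial>P)"
    using fin by (intro nn_integral_cong_AE) (auto simp: less_top)
  also have "\<dots> = (\<integral>\<^sup>+x. 1 \<partial>Q)"
    using P.RN_deriv_nn_integral[OF ac sQ, of "\<lambda>_. 1"] by simp
  also have "\<dots> = 1" using Q.emeasure_space_1 by simp
  finally show "(\<integral>\<^sup>+x. ennreal (enn2real (RN_deriv P Q x)) \<partial>P) = 1" .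
qed

lemma Lambda_Q_eq:
  assumes P: "prob_space P" and Q: "prob_space Q" and sQ: "sets Q = sets P"
    and ac: "absolutely_continuous P Q"
  shows "Lambda_Q Q (log_dens P Q) l =
     ln_ennreal (\<integral>\<^sup>+x. ennreal (enn2real (RN_deriv P Q x) powr (1+l)) \<partial>P)"
proof -
  interpret P: prob_space P by fact
  have fin: "AE x in P. RN_deriv P Q x \<noteq> \<infinity>" using RN_facts[OF assms] by simp
  have m: "(\<lambda>x. ennreal (exp (l * ln (enn2real (RN_deriv P Q x))))) \<in> borel_measurable P"
    by measurable
  have "(\<integral>\<^sup>+x. ennreal (exp (l * log_dens P Q x)) \<partial>Q) =
      (\<integral>\<^sup>+x. RN_deriv P Q x * ennreal (exp (l * ln (enn2real (RN_deriv P Q x)))) \<partial>P)"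
    unfolding log_dens_def by (rule P.RN_deriv_nn_integral[OF ac sQ m])
  also have "\<dots> = (\<integral>\<^sup>+x. ennreal (enn2real (RN_deriv P Q x) powr (1+l)) \<partial>P)"
  proof (rule nn_integral_cong_AE)
    show "AE x in P. RN_deriv P Q x * ennreal (exp (l * ln (enn2real (RN_deriv P Q x)))) =
        ennreal (enn2real (RN_deriv P Q x) powr (1+l))"
      using fin
    proof eventually_elim
      case (elim x)
      obtain z where R: "RN_deriv P Q x = ennreal z" and z0: "z \<ge> 0"
        using elim by (cases "RN_deriv P Q x") auto
      show ?case
      proof (cases "z = 0")
        case True then show ?thesis using R by simp
      next
        case False
        hence zp: "z > 0" using z0 by simp
        have "z powr (1+l) = exp ((1+l) * ln z)" using zp by (simp add: powr_def)
        also have "\<dots> = z * exp (l * ln z)" using zp by (simp add: distrib_right exp_add)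
        finally have e: "z powr (1+l) = z * exp (l * ln z)" .
        have "RN_deriv P Q x * ennreal (exp (l * ln (enn2real (RN_deriv P Q x)))) = ennreal z * ennreal (exp (l * ln z))"
          unfolding R using z0 by simp
        also have "\<dots> = ennreal (z * exp (l * ln z))" using z0 by (rule ennreal_mult[symmetric]) simp
        finally show ?thesis using R z0 by (simp add: e)
      qed
    qed
  qed
  finally show ?thesis unfolding Lambda_Q_def by simp
qed



lemma cancel_le:
  fixes a b :: ennreal
  assumes "a + ennreal c \<le> b + ennreal c" shows "a \<le> b"
proof -
  have "ennreal c + a \<le> ennreal c + b" using assms by (simp add: add.commute)
  then show ?thesis unfolding ennreal_add_left_cancel_le by simp
qed

lemma int_cZ:
  assumes "c \<ge> 0" "(\<integral>\<^sup>+x. ennreal (Z x) \<partial>M) = 1" "\<And>x. Z x \<ge> 0" "Z \<in> borel_measurable M"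
  shows "(\<integral>\<^sup>+x. ennreal (c * Z x) \<partial>M) = ennreal c"
proof -
  have "(\<integral>\<^sup>+x. ennreal (c * Z x) \<partial>M) = (\<integral>\<^sup>+x. ennreal c * ennreal (Z x) \<partial>M)"
    using assms by (simp add: ennreal_mult)
  also have "\<dots> = ennreal c * (\<integral>\<^sup>+x. ennreal (Z x) \<partial>M)" using assms(4) by (intro nn_integral_cmult) auto
  finally show ?thesis using assms by simp
qed

lemma part2:
  assumes P: "prob_space P" and Q0U: "Q0 \<in> U_mu mu P" and Q: "prob_space Q"
    and sQ: "sets Q = sets P" and ac: "absolutely_continuous P Q" and r0: "r0 > 0"
    and H: "AE x in P.
           (RN_deriv P Q0 x \<le> ennreal r0 \<longrightarrow>
              RN_deriv P Q0 x \<le> RN_deriv P Q x \<and> RN_deriv P Q x \<le> ennreal r0) \<and>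
           (RN_deriv P Q0 x \<ge> ennreal r0 \<longrightarrow>
              ennreal r0 \<le> RN_deriv P Q x \<and> RN_deriv P Q x \<le> RN_deriv P Q0 x)"
  shows "Q \<in> U_mu mu P"
proof -
  from Q0U have Q0: "prob_space Q0" and sQ0: "sets Q0 = sets P" and ac0: "absolutely_continuous P Q0"
    and L0: "\<And>l. l > 0 \<Longrightarrow> Lambda_Q Q0 (log_dens P Q0) l \<le> Lambda_mu mu l"
    unfolding U_mu_def by auto
  note F = RN_facts[OF P Q sQ ac]
  note F0 = RN_facts[OF P Q0 sQ0 ac0]
  define Z where "Z = (\<lambda>x. enn2real (RN_deriv P Q x))"
  define Z0 where "Z0 = (\<lambda>x. enn2real (RN_deriv P Q0 x))"
  have Zm[measurable]: "Z \<in> borel_measurable P" "Z0 \<in> borel_measurable P"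
    unfolding Z_def Z0_def by measurable
  have I1: "(\<integral>\<^sup>+x. ennreal (Z x) \<partial>P) = 1" "(\<integral>\<^sup>+x. ennreal (Z0 x) \<partial>P) = 1"
    using F(2) F0(2) by (simp_all add: Z_def Z0_def)
  have "\<forall>l>0. Lambda_Q Q (log_dens P Q) l \<le> Lambda_mu mu l"
  proof (intro allI impI)
    fix l :: real assume l: "l > 0"
    define c where "c = (1+l) * r0 powr l"
    have c: "c \<ge> 0" using l r0 by (simp add: c_def)
    have pw: "AE x in P. ennreal (Z x powr (1+l)) + ennreal (c * Z0 x) \<le>
                         ennreal (Z0 x powr (1+l)) + ennreal (c * Z x)"
      using F(1) F0(1) H
    proof eventually_elim
      case (elim x)
      have R: "RN_deriv P Q x = ennreal (Z x)" "RN_deriv P Q0 x = ennreal (Z0 x)"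
        using elim(1,2) unfolding Z_def Z0_def by (simp_all add: less_top[symmetric])
      have nn: "Z x \<ge> 0" "Z0 x \<ge> 0" by (auto simp: Z_def Z0_def)
      have h: "Z0 x \<le> r0 \<longrightarrow> Z0 x \<le> Z x \<and> Z x \<le> r0" "Z0 x \<ge> r0 \<longrightarrow> r0 \<le> Z x \<and> Z x \<le> Z0 x"
        using elim(3) nn r0 unfolding R by (simp_all add: ennreal_le_iff)
      have "Z x powr (1+l) + c * Z0 x \<le> Z0 x powr (1+l) + c * Z x"
        using pointwise2[OF nn(2) nn(1) r0 _ h] l by (simp add: c_def)
      then show ?case using nn c by (simp add: ennreal_plus[symmetric] del: ennreal_plus)
    qed
    have "(\<integral>\<^sup>+x. ennreal (Z x powr (1+l)) \<partial>P) + ennreal c =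
        (\<integral>\<^sup>+x. ennreal (Z x powr (1+l)) + ennreal (c * Z0 x) \<partial>P)"
      using int_cZ[OF c I1(2) _ Zm(2)] by (subst nn_integral_add) (simp_all add: Z0_def)
    also have "\<dots> \<le> (\<integral>\<^sup>+x. ennreal (Z0 x powr (1+l)) + ennreal (c * Z x) \<partial>P)"
      using pw by (rule nn_integral_mono_AE)
    also have "\<dots> = (\<integral>\<^sup>+x. ennreal (Z0 x powr (1+l)) \<partial>P) + ennreal c"
      using int_cZ[OF c I1(1) _ Zm(1)] by (subst nn_integral_add) (simp_all add: Z_def)
    finally have le: "(\<integral>\<^sup>+x. ennreal (Z x powr (1+l)) \<partial>P) \<le> (\<integral>\<^sup>+x. ennreal (Z0 x powr (1+l)) \<partial>P)"
      by (rule cancel_le)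
    have "Lambda_Q Q (log_dens P Q) l \<le> Lambda_Q Q0 (log_dens P Q0) l"
      unfolding Lambda_Q_eq[OF P Q sQ ac] Lambda_Q_eq[OF P Q0 sQ0 ac0]
      using ln_ennreal_mono[OF le] by (simp add: Z_def Z0_def)
    then show "Lambda_Q Q (log_dens P Q) l \<le> Lambda_mu mu l" using L0[OF l] by (rule order_trans)
  qed
  then show ?thesis unfolding U_mu_def using Q sQ ac by auto
qed



lemma mu_tail_int:
  fixes mu :: "real measure"
  assumes mu_prob: "prob_space mu" and mu_sets: "sets mu = sets borel"
    and mu_supp: "emeasure mu {0..} = 1" and mu_int: "integrable mu (\<lambda>x. x)"
    and mu_mean: "(\<integral>x. x \<partial>mu) = 1"
  shows "(\<integral>\<^sup>+s\<in>{0<..}. ennreal (G_mu mu s) \<partial>lborel) = 1"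
proof -
  interpret prob_space mu by fact
  have sp: "space mu = UNIV" using sets_eq_imp_space_eq[OF mu_sets] by simp
  have "prob {0..} = 1" using mu_supp by (simp add: measure_def)
  then have AEn: "AE x in mu. x \<in> {0..}" by (rule AE_prob_1)
  have m: "(\<lambda>x::real. max 0 x) \<in> borel_measurable mu"
    by (subst measurable_cong_sets[OF mu_sets refl]) measurable
  have LC: "(\<integral>\<^sup>+x. ennreal (max 0 x powr (0+1)) \<partial>mu) =
    ennreal (0+1) * (\<integral>\<^sup>+s\<in>{0<..}. ennreal (measure mu {x\<in>space mu. s \<le> max 0 x} * s powr 0) \<partial>lborel)"
    by (rule layer_cake[OF finite_measure_axioms m]) auto
  have "(\<integral>\<^sup>+x. ennreal (max 0 x powr (0+1)) \<partial>mu) = (\<integral>\<^sup>+x. ennreal x \<partial>mu)"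
    using AEn by (intro nn_integral_cong_AE) auto
  also have "\<dots> = ennreal (\<integral>x. x \<partial>mu)"
    using AEn by (intro nn_integral_eq_integral mu_int) auto
  finally have L1: "(\<integral>\<^sup>+x. ennreal (max 0 x powr (0+1)) \<partial>mu) = 1" using mu_mean by simp
  have "(\<integral>\<^sup>+s\<in>{0<..}. ennreal (measure mu {x\<in>space mu. s \<le> max 0 x} * s powr 0) \<partial>lborel) =
      (\<integral>\<^sup>+s\<in>{0<..}. ennreal (G_mu mu s) \<partial>lborel)"
  proof (rule nn_integral_cong)
    fix s :: real
    show "ennreal (measure mu {x\<in>space mu. s \<le> max 0 x} * s powr 0) * indicator {0<..} s =
        ennreal (G_mu mu s) * indicator {0<..} s"
    proof (cases "s > 0")
      case True
      then have "{x\<in>space mu. s \<le> max 0 x} = {s..}" by (auto simp: sp)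
      then show ?thesis using True by (simp add: G_mu_def)
    qed simp
  qed
  then show ?thesis using LC L1 by simp
qed



lemma part1:
  fixes mu :: "real measure"
  assumes mu_prob: "prob_space mu" and mu_sets: "sets mu = sets borel"
    and mu_supp: "emeasure mu {0..} = 1" and mu_int: "integrable mu (\<lambda>x. x)"
    and mu_mean: "(\<integral>x. x \<partial>mu) = 1"
    and P: "prob_space P" and Q: "prob_space Q" and sQ: "sets Q = sets P"
    and ac: "absolutely_continuous P Q" and r0: "r0 > 0"
    and h1: "\<forall>r. 0 \<le> r \<and> r \<le> r0 \<longrightarrow>
            measure P {x \<in> space P. RN_deriv P Q x \<ge> ennreal r} \<ge> G_mu mu r"
    and h2: "\<forall>r. r > r0 \<longrightarrow>
            measure P {x \<in> space P. RN_deriv P Q x \<ge> ennreal r} \<le> G_mu mu r"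
  shows "Q \<in> U_mu mu P"
proof -
  interpret P: prob_space P by fact
  interpret mu: prob_space mu by fact
  note F = RN_facts[OF P Q sQ ac]
  define Z where "Z = (\<lambda>x. enn2real (RN_deriv P Q x))"
  have Zm[measurable]: "Z \<in> borel_measurable P" unfolding Z_def by measurable
  have Zn: "\<And>x. 0 \<le> Z x" by (simp add: Z_def)
  define Pz where "Pz = (\<lambda>s. measure P {x\<in>space P. s \<le> Z x})"
  have Pzm[measurable]: "Pz \<in> borel_measurable borel"
    unfolding Pz_def by (rule tail_measurable[OF P.finite_measure_axioms Zm])
  have Gm[measurable]: "G_mu mu \<in> borel_measurable borel"
    unfolding G_mu_def
  proof (rule antimono_measurable)
    fix s t :: real assume "s \<le> t"
    then show "measure mu {t..} \<le> measure mu {s..}"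
      using mu_sets by (intro mu.finite_measure_mono) auto
  qed
  have Pz_eq: "Pz s = measure P {x \<in> space P. RN_deriv P Q x \<ge> ennreal s}" if s: "s > 0" for s
  proof -
    have "emeasure P {x\<in>space P. s \<le> Z x} = emeasure P {x \<in> space P. RN_deriv P Q x \<ge> ennreal s}"
    proof (rule emeasure_eq_AE)
      show "AE x in P. (x \<in> {x\<in>space P. s \<le> Z x}) = (x \<in> {x \<in> space P. RN_deriv P Q x \<ge> ennreal s})"
        using F(1)
      proof eventually_elim
        case (elim x)
        then have "RN_deriv P Q x = ennreal (Z x)" by (simp add: Z_def less_top)
        then show ?case using s Zn[of x] by (auto simp: ennreal_le_iff)
      qed
    qed measurable
    then show ?thesis unfolding Pz_def measure_def by simp
  qed
  have JG: "(\<integral>\<^sup>+s\<in>{0<..}. ennreal (G_mu mu s) \<partial>lborel) = 1"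
    by (rule mu_tail_int[OF assms(1-5)])
  have JZ: "(\<integral>\<^sup>+s\<in>{0<..}. ennreal (Pz s) \<partial>lborel) = 1"
  proof -
    have "(\<integral>\<^sup>+x. ennreal (Z x powr (0+1)) \<partial>P) =
      ennreal (0+1) * (\<integral>\<^sup>+s\<in>{0<..}. ennreal (Pz s * s powr 0) \<partial>lborel)"
      unfolding Pz_def by (rule layer_cake[OF P.finite_measure_axioms Zm]) (auto simp: Zn)
    moreover have "(\<integral>\<^sup>+x. ennreal (Z x powr (0+1)) \<partial>P) = 1"
      using F(2) Zn by (simp add: Z_def)
    moreover have "(\<integral>\<^sup>+s\<in>{0<..}. ennreal (Pz s * s powr 0) \<partial>lborel) =
        (\<integral>\<^sup>+s\<in>{0<..}. ennreal (Pz s) \<partial>lborel)"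
      by (rule nn_integral_cong) (auto simp: indicator_def)
    ultimately show ?thesis by simp
  qed
  have "\<forall>l>0. Lambda_Q Q (log_dens P Q) l \<le> Lambda_mu mu l"
  proof (intro allI impI)
    fix l :: real assume l: "l > 0"
    define c where "c = r0 powr l"
    have c: "c \<ge> 0" by (simp add: c_def)
    have LC: "(\<integral>\<^sup>+x. ennreal (Z x powr (l+1)) \<partial>P) =
      ennreal (l+1) * (\<integral>\<^sup>+s\<in>{0<..}. ennreal (Pz s * s powr l) \<partial>lborel)"
      unfolding Pz_def using l by (intro layer_cake[OF P.finite_measure_axioms Zm]) (auto simp: Zn)
    have pw: "ennreal (Pz s * s powr l) * indicator {0<..} s + ennreal (c * G_mu mu s) * indicator {0<..} s
      \<le> ennreal (G_mu mu s * s powr l) * indicator {0<..} s + ennreal (c * Pz s) * indicator {0<..} s" for s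
    proof (cases "s > 0")
      case True
      have G0: "G_mu mu s \<ge> 0" by (simp add: G_mu_def)
      have P0: "Pz s \<ge> 0" by (simp add: Pz_def)
      have "(s powr l - c) * (Pz s - G_mu mu s) \<le> 0"
      proof (cases "s \<le> r0")
        case True
        have "Pz s \<ge> G_mu mu s" using h1 True \<open>s > 0\<close> Pz_eq[OF \<open>s > 0\<close>] by auto
        moreover have "s powr l \<le> c" unfolding c_def using True \<open>s > 0\<close> l by (intro powr_mono2) auto
        ultimately show ?thesis by (intro mult_nonpos_nonneg) auto
      next
        case False
        have "Pz s \<le> G_mu mu s" using h2 False \<open>s > 0\<close> Pz_eq[OF \<open>s > 0\<close>] by auto
        moreover have "s powr l \<ge> c" unfolding c_def using False \<open>s > 0\<close> l r0 by (intro powr_mono2) auto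
        ultimately show ?thesis by (intro mult_nonneg_nonpos) auto
      qed
      then have "Pz s * s powr l + c * G_mu mu s \<le> G_mu mu s * s powr l + c * Pz s"
        by (simp add: algebra_simps)
      then show ?thesis using True G0 P0 c
        by (simp add: ennreal_plus[symmetric] del: ennreal_plus)
    qed simp
    have "(\<integral>\<^sup>+s\<in>{0<..}. ennreal (Pz s * s powr l) \<partial>lborel) + ennreal c =
      (\<integral>\<^sup>+s. ennreal (Pz s * s powr l) * indicator {0<..} s + ennreal (c * G_mu mu s) * indicator {0<..} s \<partial>lborel)"
    proof -
      have "(\<integral>\<^sup>+s. ennreal (c * G_mu mu s) * indicator {0<..} s \<partial>lborel) = ennreal c"
      proof -
        have e1: "(\<integral>\<^sup>+s. ennreal (c * G_mu mu s) * indicator {0<..} s \<partial>lborel) =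
            (\<integral>\<^sup>+s. ennreal (c * (G_mu mu s * indicator {0<..} s)) \<partial>lborel)"
          by (rule nn_integral_cong) (simp add: indicator_def)
        have e0: "(\<lambda>s. G_mu mu s * indicator {0<..} s) \<in> borel_measurable lborel" by measurable
        have e2: "(\<integral>\<^sup>+s. ennreal (G_mu mu s * indicator {0<..} s) \<partial>lborel) = 1"
          unfolding JG[symmetric] by (rule nn_integral_cong) (simp add: indicator_def)
        have e3: "(\<integral>\<^sup>+s. ennreal (c * (G_mu mu s * indicator {0<..} s)) \<partial>lborel) = ennreal c"
          by (rule int_cZ[OF c e2 _ e0]) (auto simp: G_mu_def)
        show ?thesis using e1 e3 by simp
      qed
      then show ?thesis by (subst nn_integral_add) auto
    qed
    also have "\<dots> \<le> (\<integral>\<^sup>+s. ennreal (G_mu mu s * s powr l) * indicator {0<..} s + ennreal (c * Pz s) * indicator {0<..} s \<partial>lborel)"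
      by (intro nn_integral_mono pw)
    also have "\<dots> = (\<integral>\<^sup>+s\<in>{0<..}. ennreal (G_mu mu s * s powr l) \<partial>lborel) + ennreal c"
    proof -
      have "(\<integral>\<^sup>+s. ennreal (c * Pz s) * indicator {0<..} s \<partial>lborel) = ennreal c"
      proof -
        have e1: "(\<integral>\<^sup>+s. ennreal (c * Pz s) * indicator {0<..} s \<partial>lborel) =
            (\<integral>\<^sup>+s. ennreal (c * (Pz s * indicator {0<..} s)) \<partial>lborel)"
          by (rule nn_integral_cong) (simp add: indicator_def)
        have e0: "(\<lambda>s. Pz s * indicator {0<..} s) \<in> borel_measurable lborel" by measurable
        have e2: "(\<integral>\<^sup>+s. ennreal (Pz s * indicator {0<..} s) \<partial>lborel) = 1"
          unfolding JZ[symmetric] by (rule nn_integral_cong) (simp add: indicator_def)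
        have e3: "(\<integral>\<^sup>+s. ennreal (c * (Pz s * indicator {0<..} s)) \<partial>lborel) = ennreal c"
          by (rule int_cZ[OF c e2 _ e0]) (auto simp: Pz_def)
        show ?thesis using e1 e3 by simp
      qed
      then show ?thesis by (subst nn_integral_add) auto
    qed
    finally have le: "(\<integral>\<^sup>+s\<in>{0<..}. ennreal (Pz s * s powr l) \<partial>lborel) \<le>
        (\<integral>\<^sup>+s\<in>{0<..}. ennreal (G_mu mu s * s powr l) \<partial>lborel)"
      by (rule cancel_le)
    have "(\<integral>\<^sup>+x. ennreal (enn2real (RN_deriv P Q x) powr (1+l)) \<partial>P) \<le>
      ennreal (l + 1) * (\<integral>\<^sup>+s\<in>{0<..}. ennreal (G_mu mu s * s powr l) \<partial>lborel)"
      using LC mult_left_mono[OF le] by (simp add: Z_def add.commute)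
    then show "Lambda_Q Q (log_dens P Q) l \<le> Lambda_mu mu l"
      unfolding Lambda_Q_eq[OF P Q sQ ac] Lambda_mu_def by (rule ln_ennreal_mono)
  qed
  then show ?thesis unfolding U_mu_def using Q sQ ac by auto
qed



lemma div_cancel_ennreal:
  fixes x p :: ennreal
  assumes "p \<noteq> 0" "p \<noteq> \<top>"
  shows "x / p * p = x"
proof -
  have "x / p * p = p * x / p" by (simp add: ennreal_times_divide mult.commute)
  also have "\<dots> = x * p / p" by (simp add: mult.commute)
  also have "\<dots> = x" using assms by (rule ennreal_mult_divide_eq)
  finally show ?thesis .
qed

lemma div_le_iff_ennreal:
  fixes a b p :: ennreal
  assumes "p \<noteq> 0" "p \<noteq> \<top>"
  shows "a / p \<le> b / p \<longleftrightarrow> a \<le> b"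
proof
  assume "a / p \<le> b / p"
  then have "a / p * p \<le> b / p * p" by (rule mult_right_mono) simp
  then show "a \<le> b" using div_cancel_ennreal[OF assms] by simp
qed (rule divide_right_mono_ennreal)

lemma part3:
  fixes nu :: "'a measure"
  assumes P: "prob_space P" and Q0U: "Q0 \<in> U_mu mu P" and Q: "prob_space Q"
    and nu: "sigma_finite_measure nu"
    and q0m: "q0 \<in> borel_measurable nu" and qm: "q \<in> borel_measurable nu" and pm: "p \<in> borel_measurable nu"
    and Q0d: "Q0 = density nu q0" and Pd: "P = density nu p" and Qd: "Q = density nu q" and r0: "r0 > 0"
    and H: "AE x in nu. min (q0 x) (ennreal r0 * p x) \<le> q x \<and>
                     q x \<le> max (q0 x) (ennreal r0 * p x)"
  shows "Q \<in> U_mu mu P"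
proof -
  interpret P: prob_space P by fact
  from Q0U have ac0: "absolutely_continuous P Q0" unfolding U_mu_def by auto
  have sP: "sets P = sets nu" using Pd by simp
  have sQ: "sets Q = sets P" using Pd Qd by simp
  have spP: "space P = space nu" using Pd by simp
  have "emeasure P (space P) = (\<integral>\<^sup>+x. p x * indicator (space nu) x \<partial>nu)"
    unfolding Pd using emeasure_density[OF pm, of "space nu"] by simp
  also have "\<dots> = (\<integral>\<^sup>+x. p x \<partial>nu)"
    by (rule nn_integral_cong) simp
  finally have intp: "(\<integral>\<^sup>+x. p x \<partial>nu) = 1" using P.emeasure_space_1 by simp
  have pfin: "AE x in nu. p x \<noteq> \<infinity>"
    using pm intp by (intro nn_integral_PInf_AE) auto
  define A where "A = {x\<in>space nu. p x = 0}"
  have A: "A \<in> sets nu" unfolding A_def using pm by measurable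
  have "emeasure P A = (\<integral>\<^sup>+x. p x * indicator A x \<partial>nu)"
    unfolding Pd by (rule emeasure_density[OF pm A])
  also have "\<dots> = (\<integral>\<^sup>+x. 0 \<partial>nu)"
    by (rule nn_integral_cong) (auto simp: A_def indicator_def)
  finally have "A \<in> null_sets P" using A sP by (simp add: null_sets_def)
  then have "A \<in> null_sets Q0" using ac0 unfolding absolutely_continuous_def by auto
  then have "emeasure Q0 A = 0" by auto
  moreover have "emeasure Q0 A = (\<integral>\<^sup>+x. q0 x * indicator A x \<partial>nu)"
    unfolding Q0d by (rule emeasure_density[OF q0m A])
  ultimately have "AE x in nu. q0 x * indicator A x = 0"
    using q0m A by (subst nn_integral_0_iff_AE[symmetric]) auto
  then have q00: "AE x in nu. p x = 0 \<longrightarrow> q0 x = 0"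
    using AE_space by eventually_elim (auto simp: A_def indicator_def split: if_splits)
  define f0 where "f0 = (\<lambda>x. q0 x / p x)"
  define f where "f = (\<lambda>x. q x / p x)"
  have f0m: "f0 \<in> borel_measurable P" and fm: "f \<in> borel_measurable P"
    unfolding f0_def f_def using q0m qm pm by (simp_all add: measurable_cong_sets[OF sP refl])
  have pq: "AE x in nu. p x * f x = q x"
    using pfin q00 H
  proof eventually_elim
    case (elim x)
    show ?case
    proof (cases "p x = 0")
      case True
      then have "q x = 0" using elim by simp
      then show ?thesis using True by (simp add: f_def)
    next
      case False
      then show ?thesis using elim(1) div_cancel_ennreal[of "p x" "q x"]
        by (simp add: f_def mult.commute)
    qed
  qed
  have dens: "density P f = Q"
  proof -
    have "density P f = density nu (\<lambda>x. p x * f x)"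
      unfolding Pd using pm fm sP by (intro density_density_eq) (simp_all add: measurable_cong_sets[OF sP refl])
    also have "\<dots> = density nu q"
      using pq pm fm qm sP by (intro density_cong) (simp_all add: measurable_cong_sets[OF sP refl])
    finally show ?thesis using Qd by simp
  qed
  have pq0: "AE x in nu. p x * f0 x = q0 x"
    using pfin q00
  proof eventually_elim
    case (elim x)
    show ?case
    proof (cases "p x = 0")
      case True
      then show ?thesis using elim by (simp add: f0_def)
    next
      case False
      then show ?thesis using elim(1) div_cancel_ennreal[of "p x" "q0 x"]
        by (simp add: f0_def mult.commute)
    qed
  qed
  have dens0: "density P f0 = Q0"
  proof -
    have "density P f0 = density nu (\<lambda>x. p x * f0 x)"
      unfolding Pd using pm f0m sP by (intro density_density_eq) (simp_all add: measurable_cong_sets[OF sP refl])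
    also have "\<dots> = density nu q0"
      using pq0 pm f0m q0m sP by (intro density_cong) (simp_all add: measurable_cong_sets[OF sP refl])
    finally show ?thesis using Q0d by simp
  qed
  have acQ: "absolutely_continuous P Q"
    unfolding dens[symmetric] by (rule absolutely_continuousI_density[OF fm])
  have R: "AE x in P. f x = RN_deriv P Q x" by (rule P.RN_deriv_unique[OF fm dens])
  have R0: "AE x in P. f0 x = RN_deriv P Q0 x" by (rule P.RN_deriv_unique[OF f0m dens0])
  have HP: "AE x in P. p x \<noteq> 0 \<and> p x \<noteq> \<infinity> \<and> min (q0 x) (ennreal r0 * p x) \<le> q x \<and>
                     q x \<le> max (q0 x) (ennreal r0 * p x)"
  proof -
    have "AE x in nu. 0 < p x \<longrightarrow> p x \<noteq> 0 \<and> p x \<noteq> \<infinity> \<and> min (q0 x) (ennreal r0 * p x) \<le> q x \<and>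
                     q x \<le> max (q0 x) (ennreal r0 * p x)"
      using pfin H by eventually_elim auto
    then show ?thesis unfolding Pd AE_density[OF pm] .
  qed
  have Hyp: "AE x in P.
           (RN_deriv P Q0 x \<le> ennreal r0 \<longrightarrow>
              RN_deriv P Q0 x \<le> RN_deriv P Q x \<and> RN_deriv P Q x \<le> ennreal r0) \<and>
           (RN_deriv P Q0 x \<ge> ennreal r0 \<longrightarrow>
              ennreal r0 \<le> RN_deriv P Q x \<and> RN_deriv P Q x \<le> RN_deriv P Q0 x)"
    using R R0 HP
  proof eventually_elim
    case (elim x)
    have p: "p x \<noteq> 0" "p x \<noteq> \<top>" using elim(3) by auto
    have r: "ennreal r0 = ennreal r0 * p x / p x" using p by (simp add: ennreal_mult_divide_eq)
    note D = div_le_iff_ennreal[OF p]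
    have mm: "min (q0 x) (ennreal r0 * p x) \<le> q x" "q x \<le> max (q0 x) (ennreal r0 * p x)"
      using elim(3) by auto
    show ?case
      unfolding elim(1)[symmetric] elim(2)[symmetric] f_def f0_def
      apply (subst (1 2 3 4) r)
      unfolding D using mm by (auto simp: min_def max_def split: if_splits)
  qed
  show ?thesis by (rule part2[OF P Q0U Q sQ acQ r0 Hyp])
qed


theorem mainTheorem8:
  fixes mu :: "real measure" and P :: "'a measure"
  assumes mu_prob: "prob_space mu"
    and mu_sets: "sets mu = sets borel"
    and mu_supp: "emeasure mu {0..} = 1"
    and mu_int: "integrable mu (\<lambda>x. x)"
    and mu_mean: "(\<integral>x. x \<partial>mu) = 1"
    and mu_fin: "\<exists>\<epsilon>>0. \<forall>l. 0 \<le> l \<and> l < \<epsilon> \<longrightarrow>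
                    Lambda_mu mu l \<noteq> \<infinity> \<and> Lambda_mu mu l \<noteq> - \<infinity>"
    and P_prob: "prob_space P"
  shows
    "(\<forall>Q r0. prob_space Q \<and> sets Q = sets P \<and> absolutely_continuous P Q \<and> r0 > 0 \<and>
        (\<forall>r. 0 \<le> r \<and> r \<le> r0 \<longrightarrow>
            measure P {x \<in> space P. RN_deriv P Q x \<ge> ennreal r} \<ge> G_mu mu r) \<and>
        (\<forall>r. r > r0 \<longrightarrow>
            measure P {x \<in> space P. RN_deriv P Q x \<ge> ennreal r} \<le> G_mu mu r)
      \<longrightarrow> Q \<in> U_mu mu P)
   \<and>
    (\<forall>Q0 Q r0. Q0 \<in> U_mu mu P \<and> prob_space Q \<and> sets Q = sets P \<and>
        absolutely_continuous P Q \<and> r0 > 0 \<and>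
        (AE x in P.
           (RN_deriv P Q0 x \<le> ennreal r0 \<longrightarrow>
              RN_deriv P Q0 x \<le> RN_deriv P Q x \<and> RN_deriv P Q x \<le> ennreal r0) \<and>
           (RN_deriv P Q0 x \<ge> ennreal r0 \<longrightarrow>
              ennreal r0 \<le> RN_deriv P Q x \<and> RN_deriv P Q x \<le> RN_deriv P Q0 x))
      \<longrightarrow> Q \<in> U_mu mu P)
   \<and>
    (\<forall>(nu :: 'a measure) Q0 Q q0 q p r0. Q0 \<in> U_mu mu P \<and> prob_space Q \<and>
        sigma_finite_measure nu \<and>
        q0 \<in> borel_measurable nu \<and> q \<in> borel_measurable nu \<and> p \<in> borel_measurable nu \<and>
        Q0 = density nu q0 \<and> P = density nu p \<and> Q = density nu q \<and> r0 > 0 \<and>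
        (AE x in nu. min (q0 x) (ennreal r0 * p x) \<le> q x \<and>
                     q x \<le> max (q0 x) (ennreal r0 * p x))
      \<longrightarrow> Q \<in> U_mu mu P)"
  proof (intro conjI allI impI)
  fix Q r0
  assume h: "prob_space Q \<and> sets Q = sets P \<and> absolutely_continuous P Q \<and> r0 > 0 \<and>
        (\<forall>r. 0 \<le> r \<and> r \<le> r0 \<longrightarrow>
            measure P {x \<in> space P. RN_deriv P Q x \<ge> ennreal r} \<ge> G_mu mu r) \<and>
        (\<forall>r. r > r0 \<longrightarrow>
            measure P {x \<in> space P. RN_deriv P Q x \<ge> ennreal r} \<le> G_mu mu r)"
  show "Q \<in> U_mu mu P"
    using part1[OF mu_prob mu_sets mu_supp mu_int mu_mean P_prob] h by blast
next
  fix Q0 Q r0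
  assume h: "Q0 \<in> U_mu mu P \<and> prob_space Q \<and> sets Q = sets P \<and>
        absolutely_continuous P Q \<and> r0 > 0 \<and>
        (AE x in P.
           (RN_deriv P Q0 x \<le> ennreal r0 \<longrightarrow>
              RN_deriv P Q0 x \<le> RN_deriv P Q x \<and> RN_deriv P Q x \<le> ennreal r0) \<and>
           (RN_deriv P Q0 x \<ge> ennreal r0 \<longrightarrow>
              ennreal r0 \<le> RN_deriv P Q x \<and> RN_deriv P Q x \<le> RN_deriv P Q0 x))"
  show "Q \<in> U_mu mu P"
    using part2[OF P_prob] h by blast
next
  fix nu :: "'a measure" and Q0 Q q0 q p r0
  assume h: "Q0 \<in> U_mu mu P \<and> prob_space Q \<and>
        sigma_finite_measure nu \<and>
        q0 \<in> borel_measurable nu \<and> q \<in> borel_measurable nu \<and> p \<in> borel_measurable nu \<and>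
        Q0 = density nu q0 \<and> P = density nu p \<and> Q = density nu q \<and> r0 > 0 \<and>
        (AE x in nu. min (q0 x) (ennreal r0 * p x) \<le> q x \<and>
                     q x \<le> max (q0 x) (ennreal r0 * p x))"
  show "Q \<in> U_mu mu P"
    using part3[OF P_prob, of Q0 mu Q nu q0 q p r0] h by blast
qed

end
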